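(* Let $G$ be a scheduling game on $m$ identical machines of speed $1$ in which every job $i$ has processing-time function $p_i(t)=b_i+at$ with $b_i\ge0$ and a common rate $a>0$, and in which all machines use the SBPT global priority list (non-decreasing order of $b_i$, ties broken arbitrarily). Then every pure Nash equilibrium $\sigma$ of $G$ satisfies $$C_{\max}(\sigma)\le\frac{2m+am-1}{m+a}\cdot OPT(G).$$
   Context: Scheduling game: a finite set $N$ of $n$ jobs (players) and a set $M$ of $m$ machines; machine $j$ has speed $s_j>0$. With a global priority list, all machines share the same bijection $\pi:N\to\{1,\dots,n\}$, and job $u$ has higher priority than $v$ iff $\pi(u)<\pi(v)$. A profile $\sigma\in M^N$ assigns each job to a machine. On machine $j$, the jobs assigned to it, listed in increasing $\pi$-order as $i_1,i_2,\dots$, are processed without idle time: $S_{i_1}(\sigma)=0$, $C_{i_k}(\sigma)=S_{i_k}(\sigma)+p_{i_k}(S_{i_k}(\sigma))/s_j$, $S_{i_{k+1}}(\sigma)=C_{i_k}(\sigma)$. The cost of job $i$ is $C_i(\sigma)$. A pure Nash equilibrium (NE) is a profile in which no job can strictly decrease its completion time by unilaterally changing its machine. Makespan $C_{\max}(\sigma)=\max_iC_i(\sigma)$; $OPT(G)=\min_\sigma C_{\max}(\sigma)$ over all profiles. *)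

theory Defs
  imports Complex_Main "HOL-Library.FuncSet"
begin

text \<open>Jobs form a finite set N (of type 'j), machines a finite set M (of type 'm).
  s j is the speed of machine j, p i t the processing time of job i when started at time t,
  pr is the global priority bijection N -> {1..n} (smaller value = higher priority),
  a profile sig assigns each job a machine.\<close>

definition pred_jobs :: "'j set \<Rightarrow> ('j \<Rightarrow> nat) \<Rightarrow> ('j \<Rightarrow> 'm) \<Rightarrow> 'j \<Rightarrow> 'j set" where
  "pred_jobs N pr sig i = {k \<in> N. sig k = sig i \<and> pr k < pr i}"

definition start_time :: "'j set \<Rightarrow> ('j \<Rightarrow> nat) \<Rightarrow> ('m \<Rightarrow> real) \<Rightarrow> ('j \<Rightarrow> real \<Rightarrow> real)
    \<Rightarrow> ('j \<Rightarrow> 'm) \<Rightarrow> 'j \<Rightarrow> real" where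
  "start_time N pr s p sig i =
     foldl (\<lambda>t k. t + p k t / s (sig i)) 0
       (map (inv_into N pr) (sorted_list_of_set (pr ` pred_jobs N pr sig i)))"

definition compl_time :: "'j set \<Rightarrow> ('j \<Rightarrow> nat) \<Rightarrow> ('m \<Rightarrow> real) \<Rightarrow> ('j \<Rightarrow> real \<Rightarrow> real)
    \<Rightarrow> ('j \<Rightarrow> 'm) \<Rightarrow> 'j \<Rightarrow> real" where
  "compl_time N pr s p sig i =
     start_time N pr s p sig i + p i (start_time N pr s p sig i) / s (sig i)"

definition is_NE :: "'j set \<Rightarrow> 'm set \<Rightarrow> ('j \<Rightarrow> nat) \<Rightarrow> ('m \<Rightarrow> real) \<Rightarrow> ('j \<Rightarrow> real \<Rightarrow> real)
    \<Rightarrow> ('j \<Rightarrow> 'm) \<Rightarrow> bool" where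
  "is_NE N M pr s p sig \<longleftrightarrow> sig \<in> N \<rightarrow> M \<and>
     (\<forall>i\<in>N. \<forall>j\<in>M. compl_time N pr s p sig i \<le> compl_time N pr s p (sig(i := j)) i)"

definition makespan :: "'j set \<Rightarrow> ('j \<Rightarrow> nat) \<Rightarrow> ('m \<Rightarrow> real) \<Rightarrow> ('j \<Rightarrow> real \<Rightarrow> real)
    \<Rightarrow> ('j \<Rightarrow> 'm) \<Rightarrow> real" where
  "makespan N pr s p sig = Max (compl_time N pr s p sig ` N)"

text \<open>Optimum over all profiles (restricted to N, extensional, so the set is finite).\<close>
definition OPT :: "'j set \<Rightarrow> 'm set \<Rightarrow> ('j \<Rightarrow> nat) \<Rightarrow> ('m \<Rightarrow> real) \<Rightarrow> ('j \<Rightarrow> real \<Rightarrow> real) \<Rightarrow> real" where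
  "OPT N M pr s p = Min (makespan N pr s p ` (N \<rightarrow>\<^sub>E M))"

definition SBPT :: "'j set \<Rightarrow> ('j \<Rightarrow> real) \<Rightarrow> ('j \<Rightarrow> nat) \<Rightarrow> bool" where
  "SBPT N b pr \<longleftrightarrow> bij_betw pr N {1..card N} \<and>
     (\<forall>u\<in>N. \<forall>v\<in>N. pr u < pr v \<longrightarrow> b u \<le> b v)"

end

theory Submission
  imports Defs
begin


primrec ld :: "real \<Rightarrow> (nat \<Rightarrow> real) \<Rightarrow> (nat \<Rightarrow> 'm) \<Rightarrow> nat \<Rightarrow> 'm \<Rightarrow> real" where
  "ld q \<beta> g 0 j = 0"
| "ld q \<beta> g (Suc r) j = (if g (Suc r) = j then q * ld q \<beta> g r j + \<beta> (Suc r) else ld q \<beta> g r j)"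

definition WW :: "real \<Rightarrow> (nat \<Rightarrow> real) \<Rightarrow> nat \<Rightarrow> nat \<Rightarrow> nat \<Rightarrow> real" where
  "WW q \<beta> m s R = (\<Sum>k=1..R. \<beta> k * q ^ ((R + s - k) div m))"

lemma ld_nonneg: "q \<ge> 0 \<Longrightarrow> \<forall>r\<in>{1..R}. \<beta> r \<ge> 0 \<Longrightarrow> ld q \<beta> g R j \<ge> 0"
  by (induction R) auto

lemma ld_cong: "\<forall>r\<in>{1..R}. g1 r = g2 r \<Longrightarrow> ld q \<beta> g1 R j = ld q \<beta> g2 R j"
  by (induction R) auto

lemma ld_sum_Suc:
  assumes "finite M" "g (Suc R) \<in> M"
  shows "(\<Sum>j\<in>M. ld q \<beta> g (Suc R) j) = (\<Sum>j\<in>M. ld q \<beta> g R j) + (q - 1) * ld q \<beta> g R (g (Suc R)) + \<beta> (Suc R)"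
proof -
  have "(\<Sum>j\<in>M. ld q \<beta> g (Suc R) j) = (\<Sum>j\<in>M. ld q \<beta> g R j + (if g (Suc R) = j then (q - 1) * ld q \<beta> g R j + \<beta> (Suc R) else 0))"
    by (rule sum.cong) (auto simp: algebra_simps)
  also have "\<dots> = (\<Sum>j\<in>M. ld q \<beta> g R j) + (\<Sum>j\<in>M. (if g (Suc R) = j then (q - 1) * ld q \<beta> g R j + \<beta> (Suc R) else 0))"
    by (rule sum.distrib)
  also have "(\<Sum>j\<in>M. (if g (Suc R) = j then (q - 1) * ld q \<beta> g R j + \<beta> (Suc R) else 0)) = (q - 1) * ld q \<beta> g R (g (Suc R)) + \<beta> (Suc R)"
    using assms by (simp add: sum.delta)
  finally show ?thesis by simp
qed

lemma WW_Suc: "s < m \<Longrightarrow> WW q \<beta> m s (Suc R) = WW q \<beta> m (Suc s) R + \<beta> (Suc R)"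
proof -
  assume s: "s < m"
  have "WW q \<beta> m s (Suc R) = (\<Sum>k=1..R. \<beta> k * q ^ ((Suc R + s - k) div m)) + \<beta> (Suc R) * q ^ ((Suc R + s - Suc R) div m)"
    unfolding WW_def by (simp add: sum.cl_ivl_Suc)
  also have "(\<Sum>k=1..R. \<beta> k * q ^ ((Suc R + s - k) div m)) = WW q \<beta> m (Suc s) R"
    unfolding WW_def by (rule sum.cong) auto
  finally show ?thesis using s by simp
qed

lemma WW_Suc_m: "0 < m \<Longrightarrow> WW q \<beta> m m (Suc R) = q * (WW q \<beta> m 1 R + \<beta> (Suc R))"
proof -
  assume m: "0 < m"
  have "WW q \<beta> m m (Suc R) = (\<Sum>k=1..R. \<beta> k * q ^ ((Suc R + m - k) div m)) + \<beta> (Suc R) * q ^ ((Suc R + m - Suc R) div m)"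
    unfolding WW_def by (simp add: sum.cl_ivl_Suc)
  also have "(\<Sum>k=1..R. \<beta> k * q ^ ((Suc R + m - k) div m)) = (\<Sum>k=1..R. q * (\<beta> k * q ^ ((R + 1 - k) div m)))"
  proof (rule sum.cong)
    fix k assume k: "k \<in> {1..R}"
    have e1: "Suc R + m - k = (R + 1 - k) + m" using k by simp
    have "(Suc R + m - k) div m = ((R + 1 - k) + m) div m" by (simp only: e1)
    also have "\<dots> = (R + 1 - k) div m + 1" using m by (simp only: div_add_self2[of m] neq0_conv) 
    finally have e2: "(Suc R + m - k) div m = (R + 1 - k) div m + 1" .
    show "\<beta> k * q ^ ((Suc R + m - k) div m) = q * (\<beta> k * q ^ ((R + 1 - k) div m))" 
      by (simp only: e2 power_Suc[symmetric] Suc_eq_plus1[symmetric]) (simp add: algebra_simps)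
  qed (rule refl)
  also have "\<dots> = q * WW q \<beta> m 1 R" unfolding WW_def by (simp add: sum_distrib_left)
  finally show ?thesis using m by (simp add: algebra_simps)
qed



lemma LS_bound:
  assumes fin: "finite M" and mM: "card M = m" and m0: "0 < m" and a: "a \<ge> 0"
  shows "(\<forall>r\<in>{1..R}. g r \<in> M) \<Longrightarrow>
    (\<forall>r\<in>{1..R}. \<forall>j\<in>M. ld (1+a) \<beta> g (r-1) (g r) \<le> ld (1+a) \<beta> g (r-1) j) \<Longrightarrow>
    \<forall>s\<le>m. \<exists>S\<subseteq>M. card S = s \<and>
      (\<Sum>j\<in>M. ld (1+a) \<beta> g R j) + a * (\<Sum>j\<in>S. ld (1+a) \<beta> g R j) \<le> WW (1+a) \<beta> m s R"
proof (induction R)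
  case 0
  show ?case
  proof (intro allI impI)
    fix s assume "s \<le> m"
    then obtain S where "S \<subseteq> M" "card S = s" using obtain_subset_with_card_n[of s M] mM by auto
    thus "\<exists>S\<subseteq>M. card S = s \<and> (\<Sum>j\<in>M. ld (1+a) \<beta> g 0 j) + a * (\<Sum>j\<in>S. ld (1+a) \<beta> g 0 j) \<le> WW (1+a) \<beta> m s 0"
      by (auto simp: WW_def)
  qed
next
  case (Suc R)
  let ?l = "ld (1+a) \<beta> g R" and ?l' = "ld (1+a) \<beta> g (Suc R)"
  define c where "c = g (Suc R)"
  have IH: "\<forall>s\<le>m. \<exists>S\<subseteq>M. card S = s \<and> sum ?l M + a * sum ?l S \<le> WW (1+a) \<beta> m s R"
    using Suc by auto
  have cM: "c \<in> M" using Suc.prems(1) c_def by auto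
  have cmin: "\<forall>j\<in>M. ?l c \<le> ?l j" using Suc.prems(2) c_def by (metis atLeastAtMost_iff diff_Suc_1 le_refl le_add1 plus_1_eq_Suc)
  have sumS: "sum ?l' M = sum ?l M + a * ?l c + \<beta> (Suc R)"
    using ld_sum_Suc[OF fin, of g R "1+a" \<beta>] cM c_def by simp
  have ne: "\<And>j. j \<noteq> c \<Longrightarrow> ?l' j = ?l j" using c_def by simp
  have eqS: "sum ?l' S = sum ?l S" if "c \<notin> S" for S
  proof (rule sum.cong[OF refl])
    fix x assume "x \<in> S" with that have "x \<noteq> c" by blast
    then show "?l' x = ?l x" by (rule ne)
  qed
  show ?case
  proof (intro allI impI)
    fix s assume sm: "s \<le> m"
    show "\<exists>S\<subseteq>M. card S = s \<and> sum ?l' M + a * sum ?l' S \<le> WW (1+a) \<beta> m s (Suc R)"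
    proof (cases "s < m")
      case True
      then obtain S' where S': "S' \<subseteq> M" "card S' = Suc s" "sum ?l M + a * sum ?l S' \<le> WW (1+a) \<beta> m (Suc s) R"
        using IH by (metis Suc_leI)
      have finS': "finite S'" using S'(1) fin finite_subset by auto
      have "\<exists>S\<subseteq>M. card S = s \<and> sum ?l' S \<le> sum ?l S' - ?l c"
      proof (cases "c \<in> S'")
        case True
        have "sum ?l S' = ?l c + sum ?l (S' - {c})" using True finS' sum.remove by metis
        moreover have "sum ?l' (S' - {c}) = sum ?l (S' - {c})" by (rule eqS) auto
        moreover have "card (S' - {c}) = s" using True S'(2) finS' by simp
        ultimately show ?thesis using S'(1) by (intro exI[of _ "S' - {c}"]) auto
      next
        case False
        obtain x where x: "x \<in> S'" using S'(2) by (metis card.empty ex_in_conv nat.simps(3))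
        have "sum ?l S' = ?l x + sum ?l (S' - {x})" using x finS' sum.remove by metis
        moreover have "sum ?l' (S' - {x}) = sum ?l (S' - {x})" by (rule eqS) (use False in auto)
        moreover have "card (S' - {x}) = s" using x S'(2) finS' by simp
        moreover have "?l c \<le> ?l x" using cmin x S'(1) by auto
        ultimately show ?thesis using S'(1) by (intro exI[of _ "S' - {x}"]) auto
      qed
      then obtain S where S: "S \<subseteq> M" "card S = s" "sum ?l' S \<le> sum ?l S' - ?l c" by blast
      have "a * sum ?l' S \<le> a * (sum ?l S' - ?l c)" using S(3) a by (rule mult_left_mono)
      hence "sum ?l' M + a * sum ?l' S \<le> WW (1+a) \<beta> m (Suc s) R + \<beta> (Suc R)"
        using sumS S'(3) by (simp add: algebra_simps)
      also have "\<dots> = WW (1+a) \<beta> m s (Suc R)" using WW_Suc[OF True] by simp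
      finally show ?thesis using S by blast
    next
      case False
      hence sm': "s = m" using sm by simp
      obtain S1 where S1: "S1 \<subseteq> M" "card S1 = 1" "sum ?l M + a * sum ?l S1 \<le> WW (1+a) \<beta> m 1 R"
        using IH m0 by (metis One_nat_def Suc_leI)
      then obtain x where x: "S1 = {x}" by (metis card_1_singletonE)
      have "?l c \<le> ?l x" using cmin x S1(1) by auto
      hence "a * ?l c \<le> a * ?l x" using a by (rule mult_left_mono)
      hence "sum ?l M + a * ?l c \<le> WW (1+a) \<beta> m 1 R" using S1(3) x by simp
      hence "(1 + a) * (sum ?l M + a * ?l c + \<beta> (Suc R)) \<le> (1 + a) * (WW (1+a) \<beta> m 1 R + \<beta> (Suc R))"
        using a by (intro mult_left_mono) auto
      also have "\<dots> = WW (1+a) \<beta> m m (Suc R)" using WW_Suc_m[OF m0] by simp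
      finally have "sum ?l' M + a * sum ?l' M \<le> WW (1+a) \<beta> m s (Suc R)" using sumS sm' by (simp add: algebra_simps)
      thus ?thesis using mM sm' by (intro exI[of _ M]) auto
    qed
  qed
qed



definition rc :: "(nat \<Rightarrow> 'm) \<Rightarrow> nat \<Rightarrow> nat \<Rightarrow> nat" where
  "rc g P k = card {k'\<in>{Suc k..P}. g k' = g k}"

lemma rc_Suc: "k \<le> P \<Longrightarrow> rc g (Suc P) k = rc g P k + (if g (Suc P) = g k then 1 else 0)"
proof -
  assume k: "k \<le> P"
  let ?A = "{k'\<in>{Suc k..P}. g k' = g k}"
  have fA: "finite ?A" by simp
  have nA: "Suc P \<notin> ?A" by simp
  have "{k'\<in>{Suc k..Suc P}. g k' = g k} = (if g (Suc P) = g k then insert (Suc P) ?A else ?A)"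
    using k by (auto simp: le_Suc_eq)
  thus ?thesis unfolding rc_def using fA nA by (simp add: card_insert_if)
qed

lemma rc_self: "rc g P P = 0" unfolding rc_def by simp

lemma ld_formula: "ld q \<beta> g P j = (\<Sum>k\<in>{k\<in>{1..P}. g k = j}. \<beta> k * q ^ rc g P k)"
proof (induction P)
  case 0 then show ?case by simp
next
  case (Suc P)
  let ?A = "{k\<in>{1..P}. g k = j}"
  have fA: "finite ?A" by simp
  have nA: "Suc P \<notin> ?A" by simp
  show ?case
  proof (cases "g (Suc P) = j")
    case True
    have set: "{k\<in>{1..Suc P}. g k = j} = insert (Suc P) ?A" using True by (auto simp: le_Suc_eq)
    have "(\<Sum>k\<in>?A. \<beta> k * q ^ rc g (Suc P) k) = (\<Sum>k\<in>?A. q * (\<beta> k * q ^ rc g P k))"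
    proof (rule sum.cong[OF refl])
      fix k assume "k \<in> ?A"
      hence "k \<le> P" "g k = j" by auto
      hence "rc g (Suc P) k = Suc (rc g P k)" using rc_Suc[of k P g] True by simp
      thus "\<beta> k * q ^ rc g (Suc P) k = q * (\<beta> k * q ^ rc g P k)" by simp
    qed
    also have "\<dots> = q * ld q \<beta> g P j" using Suc.IH by (simp add: sum_distrib_left)
    finally show ?thesis unfolding set using True fA nA by (simp add: rc_self)
  next
    case False
    have set: "{k\<in>{1..Suc P}. g k = j} = ?A" using False by (auto simp: le_Suc_eq)
    have "(\<Sum>k\<in>?A. \<beta> k * q ^ rc g (Suc P) k) = (\<Sum>k\<in>?A. \<beta> k * q ^ rc g P k)"
    proof (rule sum.cong[OF refl])
      fix k assume "k \<in> ?A"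
      hence "k \<le> P" "g k = j" by auto
      hence "rc g (Suc P) k = rc g P k" using rc_Suc[of k P g] False by simp
      thus "\<beta> k * q ^ rc g (Suc P) k = \<beta> k * q ^ rc g P k" by simp
    qed
    thus ?thesis unfolding set using False Suc.IH by simp
  qed
qed

lemma sum_ld:
  assumes "finite M" "\<forall>k\<in>{1..P}. g k \<in> M"
  shows "(\<Sum>j\<in>M. ld q \<beta> g P j) = (\<Sum>k=1..P. \<beta> k * q ^ rc g P k)"
proof -
  have "(\<Sum>j\<in>M. ld q \<beta> g P j) = (\<Sum>j\<in>M. \<Sum>k\<in>{k. k\<in>{1..P} \<and> g k = j}. \<beta> k * q ^ rc g P k)"
    by (simp add: ld_formula)
  also have "\<dots> = (\<Sum>k=1..P. \<beta> k * q ^ rc g P k)"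
    using assms by (intro sum.group) auto
  finally show ?thesis .
qed

lemma count_lb:
  fixes q :: real
  assumes "finite A" "\<forall>v. card {x\<in>A. f x = v} \<le> m" "0 < m" "1 \<le> q"
  shows "(\<Sum>i<card A. q ^ (i div m)) \<le> (\<Sum>x\<in>A. q ^ f x)"
  using assms
proof (induction "card A" arbitrary: A)
  case 0
  then show ?case by simp
next
  case (Suc n)
  have ne: "A \<noteq> {}" using Suc.hyps(2) by auto
  define v where "v = Max (f ` A)"
  have "v \<in> f ` A" unfolding v_def using Suc.prems(1) ne by simp
  then obtain x0 where x0: "x0 \<in> A" "f x0 = v" by auto
  have vmax: "\<forall>x\<in>A. f x \<le> v" unfolding v_def using Suc.prems(1) by simp
  have "A \<subseteq> (\<Union>u\<in>{..v}. {x\<in>A. f x = u})" using vmax by auto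
  hence "card A \<le> card (\<Union>u\<in>{..v}. {x\<in>A. f x = u})"
    by (intro card_mono) (auto simp: Suc.prems(1))
  also have "\<dots> \<le> (\<Sum>u\<in>{..v}. card {x\<in>A. f x = u})" by (rule card_UN_le) simp
  also have "\<dots> \<le> (\<Sum>u\<in>{..v}. m)" using Suc.prems(2) by (intro sum_mono) auto
  also have "\<dots> = Suc v * m" by simp
  finally have "Suc n \<le> Suc v * m" using Suc.hyps(2) by simp
  hence "n < Suc v * m" by simp
  hence ndiv: "n div m \<le> v" using Suc.prems(3)
    by (metis less_Suc_eq_le less_mult_imp_div_less)
  have IH: "(\<Sum>i<card (A - {x0}). q ^ (i div m)) \<le> (\<Sum>x\<in>A - {x0}. q ^ f x)"
  proof (rule Suc.hyps(1))
    show "n = card (A - {x0})" using Suc.hyps(2) x0 Suc.prems(1) by simp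
    show "finite (A - {x0})" using Suc.prems(1) by simp
    show "\<forall>v. card {x\<in>A - {x0}. f x = v} \<le> m"
    proof
      fix u
      have "card {x\<in>A - {x0}. f x = u} \<le> card {x\<in>A. f x = u}" by (intro card_mono) (auto simp: Suc.prems(1))
      thus "card {x\<in>A - {x0}. f x = u} \<le> m" using Suc.prems(2) by (meson order_trans)
    qed
  qed (use Suc.prems in auto)
  have cA: "card (A - {x0}) = n" using Suc.hyps(2) x0 Suc.prems(1) by simp
  have "q ^ (n div m) \<le> q ^ f x0" using ndiv x0(2) Suc.prems(4) by (simp add: power_increasing)
  hence "(\<Sum>i<Suc n. q ^ (i div m)) \<le> q ^ f x0 + (\<Sum>x\<in>A - {x0}. q ^ f x)"
    using IH cA by simp
  also have "\<dots> = (\<Sum>x\<in>A. q ^ f x)" using x0(1) Suc.prems(1) by (simp add: sum.remove)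
  finally show ?case using Suc.hyps(2) by simp
qed

lemma rc_lt:
  assumes "k1 < k2" "k2 \<le> P" "g k1 = g k2"
  shows "rc g P k2 < rc g P k1"
proof -
  have "{k'\<in>{Suc k2..P}. g k' = g k2} \<subset> {k'\<in>{Suc k1..P}. g k' = g k1}"
  proof
    show "{k'\<in>{Suc k2..P}. g k' = g k2} \<subseteq> {k'\<in>{Suc k1..P}. g k' = g k1}" using assms by auto
    have "k2 \<in> {k'\<in>{Suc k1..P}. g k' = g k1}" "k2 \<notin> {k'\<in>{Suc k2..P}. g k' = g k2}" using assms by auto
    thus "{k'\<in>{Suc k2..P}. g k' = g k2} \<noteq> {k'\<in>{Suc k1..P}. g k' = g k1}" by blast
  qed
  thus ?thesis unfolding rc_def by (intro psubset_card_mono) auto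
qed

lemma rc_fiber:
  assumes "finite M" "\<forall>k\<in>{t..P}. g k \<in> M"
  shows "card {k\<in>{t..P}. rc g P k = v} \<le> card M"
proof (rule card_inj_on_le)
  show "inj_on g {k\<in>{t..P}. rc g P k = v}"
  proof (rule inj_onI)
    fix x y assume x: "x \<in> {k\<in>{t..P}. rc g P k = v}" and y: "y \<in> {k\<in>{t..P}. rc g P k = v}" and e: "g x = g y"
    show "x = y"
    proof (rule ccontr)
      assume "x \<noteq> y"
      hence "x < y \<or> y < x" by auto
      thus False
      proof
        assume "x < y" thus False using rc_lt[of x y P g] x y e by auto
      next
        assume "y < x" thus False using rc_lt[of y x P g] x y e by auto
      qed
    qed
  qed
  show "g ` {k\<in>{t..P}. rc g P k = v} \<subseteq> M" using assms by auto
qed (use assms in auto)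

lemma abel_aux:
  fixes x y \<beta> :: "nat \<Rightarrow> real"
  assumes X: "\<forall>t. t0 \<le> t \<longrightarrow> t \<le> P \<longrightarrow> sum y {t..P} \<le> sum x {t..P}"
    and mono: "\<forall>k k'. t0 \<le> k \<longrightarrow> k \<le> k' \<longrightarrow> k' \<le> P \<longrightarrow> \<beta> k \<le> \<beta> k'"
  shows "t0 \<le> t \<Longrightarrow> P + 1 - t = d \<Longrightarrow> (\<forall>k. t \<le> k \<longrightarrow> k \<le> P \<longrightarrow> c \<le> \<beta> k) \<Longrightarrow>
    (\<Sum>k=t..P. (\<beta> k - c) * y k) \<le> (\<Sum>k=t..P. (\<beta> k - c) * x k)"
proof (induction d arbitrary: t c)
  case 0
  then show ?case by simp
next
  case (Suc d)
  have tP: "t \<le> P" using Suc.prems(2) by simp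
  have dec: "(\<Sum>k=t..P. (\<beta> k - c) * z k) = (\<beta> t - c) * sum z {t..P} + (\<Sum>k=Suc t..P. (\<beta> k - \<beta> t) * z k)" for z :: "nat \<Rightarrow> real"
  proof -
    have "(\<Sum>k=t..P. (\<beta> k - c) * z k) = (\<Sum>k=t..P. (\<beta> t - c) * z k + (\<beta> k - \<beta> t) * z k)"
      by (rule sum.cong) (auto simp: algebra_simps)
    also have "\<dots> = (\<beta> t - c) * sum z {t..P} + (\<Sum>k=t..P. (\<beta> k - \<beta> t) * z k)"
      by (simp add: sum.distrib sum_distrib_left)
    also have "(\<Sum>k=t..P. (\<beta> k - \<beta> t) * z k) = (\<Sum>k=Suc t..P. (\<beta> k - \<beta> t) * z k)"
      using tP by (simp add: sum.atLeast_Suc_atMost)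
    finally show ?thesis .
  qed
  have IH: "(\<Sum>k=Suc t..P. (\<beta> k - \<beta> t) * y k) \<le> (\<Sum>k=Suc t..P. (\<beta> k - \<beta> t) * x k)"
    using Suc.prems mono by (intro Suc.IH) auto
  have ct: "0 \<le> \<beta> t - c" using Suc.prems(3) tP by auto
  have "sum y {t..P} \<le> sum x {t..P}" using X Suc.prems(1) tP by auto
  hence "(\<beta> t - c) * sum y {t..P} \<le> (\<beta> t - c) * sum x {t..P}" using ct by (rule mult_left_mono)
  thus ?case using IH dec[of x] dec[of y] by linarith
qed

lemma LB:
  fixes \<beta> :: "nat \<Rightarrow> real"
  assumes fin: "finite M" and mM: "card M = m" and m0: "0 < m" and q: "1 \<le> q"
    and gM: "\<forall>k\<in>{1..P}. g k \<in> M"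
    and mono: "\<forall>k k'. 1 \<le> k \<longrightarrow> k \<le> k' \<longrightarrow> k' \<le> P \<longrightarrow> \<beta> k \<le> \<beta> k'"
    and nn: "\<forall>k\<in>{1..P}. 0 \<le> \<beta> k"
  shows "WW q \<beta> m 0 P \<le> (\<Sum>j\<in>M. ld q \<beta> g P j)"
proof -
  have X: "\<forall>t. 1 \<le> t \<longrightarrow> t \<le> P \<longrightarrow> (\<Sum>k=t..P. q ^ ((P - k) div m)) \<le> (\<Sum>k=t..P. q ^ rc g P k)"
  proof (intro allI impI)
    fix t assume t: "1 \<le> t" "t \<le> P"
    have "(\<Sum>i<card {t..P}. q ^ (i div m)) \<le> (\<Sum>k\<in>{t..P}. q ^ rc g P k)"
    proof (rule count_lb)
      show "\<forall>v. card {x \<in> {t..P}. rc g P x = v} \<le> m"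
        using rc_fiber[OF fin, of t P g] gM t mM by auto
    qed (use m0 q in auto)
    moreover have "(\<Sum>i<card {t..P}. q ^ (i div m)) = (\<Sum>k=t..P. q ^ ((P - k) div m))"
    proof (rule sum.reindex_bij_witness[of _ "\<lambda>k. P - k" "\<lambda>i. P - i"])
    qed (use t in auto)
    ultimately show "(\<Sum>k=t..P. q ^ ((P - k) div m)) \<le> (\<Sum>k=t..P. q ^ rc g P k)" by simp
  qed
  have "(\<Sum>k=1..P. (\<beta> k - 0) * q ^ ((P - k) div m)) \<le> (\<Sum>k=1..P. (\<beta> k - 0) * q ^ rc g P k)"
    by (rule abel_aux[OF X mono, of 1 "P + 1 - 1" 0]) (use nn in auto)
  thus ?thesis unfolding WW_def using sum_ld[OF fin gM] by simp
qed



lemma sl_snoc: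
  assumes "finite A" "\<forall>x\<in>A. x < (y::nat)"
  shows "sorted_list_of_set (insert y A) = sorted_list_of_set A @ [y]"
proof -
  let ?L = "sorted_list_of_set A"
  have s: "sorted (?L @ [y])" using assms by (auto simp: sorted_append less_imp_le)
  have d: "distinct (?L @ [y])" using assms by auto
  have "set (?L @ [y]) = insert y A" using assms by auto
  thus ?thesis using sorted_list_of_set.idem_if_sorted_distinct[OF s d] by simp
qed

lemma foldl_ld:
  "foldl (\<lambda>t k. t + (b k + a * t)) 0 (map h (sorted_list_of_set {r\<in>{1..R}. g r = j}))
   = ld (1+a) (\<lambda>r. b (h r)) g R j"
proof (induction R)
  case 0
  then show ?case by simp
next
  case (Suc R)
  show ?case
  proof (cases "g (Suc R) = j")
    case True
    have "{r\<in>{1..Suc R}. g r = j} = insert (Suc R) {r\<in>{1..R}. g r = j}" using True by (auto simp: le_Suc_eq)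
    hence "sorted_list_of_set {r\<in>{1..Suc R}. g r = j} = sorted_list_of_set {r\<in>{1..R}. g r = j} @ [Suc R]"
      using sl_snoc[of "{r\<in>{1..R}. g r = j}" "Suc R"] by auto
    then show ?thesis using Suc.IH True by (simp add: algebra_simps)
  next
    case False
    have "{r\<in>{1..Suc R}. g r = j} = {r\<in>{1..R}. g r = j}" using False by (auto simp: le_Suc_eq)
    then show ?thesis using Suc.IH False by simp
  qed
qed

lemma st_eq:
  assumes bij: "bij_betw pr N {1..card N}" and i: "i \<in> N"
  shows "start_time N pr (\<lambda>_. 1) (\<lambda>i t. b i + a * t) sig' i
    = ld (1+a) (\<lambda>r. b (inv_into N pr r)) (\<lambda>r. sig' (inv_into N pr r)) (pr i - 1) (sig' i)"
proof -
  have inj: "inj_on pr N" using bij bij_betw_imp_inj_on by blast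
  have img: "pr ` N = {1..card N}" using bij bij_betw_imp_surj_on by blast
  have set: "pr ` pred_jobs N pr sig' i = {r\<in>{1..pr i - 1}. sig' (inv_into N pr r) = sig' i}"
  proof
    show "pr ` pred_jobs N pr sig' i \<subseteq> {r\<in>{1..pr i - 1}. sig' (inv_into N pr r) = sig' i}"
    proof
      fix r assume "r \<in> pr ` pred_jobs N pr sig' i"
      then obtain k where k: "k \<in> N" "sig' k = sig' i" "pr k < pr i" "r = pr k"
        unfolding pred_jobs_def by auto
      have "pr k \<in> {1..card N}" using k(1) img by auto
      moreover have "inv_into N pr (pr k) = k" using inv_into_f_f[OF inj k(1)] .
      ultimately show "r \<in> {r\<in>{1..pr i - 1}. sig' (inv_into N pr r) = sig' i}" using k by auto
    qed
  next
    show "{r\<in>{1..pr i - 1}. sig' (inv_into N pr r) = sig' i} \<subseteq> pr ` pred_jobs N pr sig' i"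
    proof
      fix r assume r: "r \<in> {r\<in>{1..pr i - 1}. sig' (inv_into N pr r) = sig' i}"
      have "pr i \<in> {1..card N}" using i img by auto
      hence rr: "r \<in> pr ` N" using r img by auto
      define k where "k = inv_into N pr r"
      have k: "k \<in> N" "pr k = r" unfolding k_def using rr by (auto intro: inv_into_into f_inv_into_f)
      have "k \<in> pred_jobs N pr sig' i" unfolding pred_jobs_def using k r k_def by auto
      thus "r \<in> pr ` pred_jobs N pr sig' i" using k by force
    qed
  qed
  show ?thesis unfolding start_time_def set
    using foldl_ld[of b a "inv_into N pr" "pr i - 1" "\<lambda>r. sig' (inv_into N pr r)" "sig' i"] by simp
qed

lemma ct_eq:
  assumes bij: "bij_betw pr N {1..card N}" and i: "i \<in> N"
  shows "compl_time N pr (\<lambda>_. 1) (\<lambda>i t. b i + a * t) sig' i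
    = (1+a) * ld (1+a) (\<lambda>r. b (inv_into N pr r)) (\<lambda>r. sig' (inv_into N pr r)) (pr i - 1) (sig' i) + b i"
  using st_eq[OF assms, of b a sig'] by (simp add: compl_time_def algebra_simps)



theorem theorem20:
  fixes N :: "'j set" and M :: "'m set" and b :: "'j \<Rightarrow> real" and a :: real
    and pr :: "'j \<Rightarrow> nat" and sig :: "'j \<Rightarrow> 'm"
  assumes "finite N" "N \<noteq> {}" "finite M" "M \<noteq> {}"
    and "a > 0" "\<forall>i\<in>N. b i \<ge> 0"
    and "SBPT N b pr"
    and "is_NE N M pr (\<lambda>_. 1) (\<lambda>i t. b i + a * t) sig"
  shows "makespan N pr (\<lambda>_. 1) (\<lambda>i t. b i + a * t) sig
     \<le> (2 * real (card M) + a * real (card M) - 1) / (real (card M) + a)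
        * OPT N M pr (\<lambda>_. 1) (\<lambda>i t. b i + a * t)"
proof -
  note finN = assms(1) and neN = assms(2) and finM = assms(3) and neM = assms(4)
    and apos = assms(5) and bnn = assms(6)
  define n where "n = card N"
  define m where "m = card M"
  define inv where "inv = inv_into N pr"
  define \<beta> where "\<beta> = (\<lambda>r. b (inv r))"
  define g where "g = (\<lambda>r. sig (inv r))"
  define P where "P = (\<lambda>i t. b i + a * t)"
  have m0: "0 < m" unfolding m_def using finM neM by (simp add: card_gt_0_iff)
  have a0: "0 \<le> a" using apos by simp
  have bij: "bij_betw pr N {1..n}" and bmono: "\<forall>u\<in>N. \<forall>v\<in>N. pr u < pr v \<longrightarrow> b u \<le> b v"
    using assms(7) unfolding SBPT_def n_def by auto
  have inj: "inj_on pr N" using bij bij_betw_imp_inj_on by blast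
  have img: "pr ` N = {1..n}" using bij bij_betw_imp_surj_on by blast
  have invN: "inv r \<in> N" "pr (inv r) = r" if "r \<in> {1..n}" for r
    using that img unfolding inv_def by (auto intro: inv_into_into f_inv_into_f)
  have invpr: "inv (pr i) = i" if "i \<in> N" for i unfolding inv_def using inv_into_f_f[OF inj that] .
  have prN: "pr i \<in> {1..n}" if "i \<in> N" for i using that img by auto
  have \<beta>mono: "\<forall>k k'. 1 \<le> k \<longrightarrow> k \<le> k' \<longrightarrow> k' \<le> n \<longrightarrow> \<beta> k \<le> \<beta> k'"
  proof (intro allI impI)
    fix k k' :: nat assume h: "1 \<le> k" "k \<le> k'" "k' \<le> n"
    show "\<beta> k \<le> \<beta> k'"
    proof (cases "k = k'")
      case False
      hence "k < k'" using h by simp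
      thus ?thesis unfolding \<beta>_def using bmono invN[of k] invN[of k'] h by auto
    qed simp
  qed
  have \<beta>nn: "\<forall>k\<in>{1..n}. 0 \<le> \<beta> k" unfolding \<beta>_def using bnn invN by auto
  have bij': "bij_betw pr N {1..card N}" using bij n_def by simp
  have ct: "compl_time N pr (\<lambda>_. 1) P sig' i = (1+a) * ld (1+a) \<beta> (\<lambda>r. sig' (inv r)) (pr i - 1) (sig' i) + b i"
    if "i \<in> N" for sig' i
    using ct_eq[OF bij' that, of b a sig'] unfolding P_def \<beta>_def inv_def by simp
  have sigM: "sig \<in> N \<rightarrow> M" and NE: "\<forall>i\<in>N. \<forall>j\<in>M. compl_time N pr (\<lambda>_. 1) P sig i \<le> compl_time N pr (\<lambda>_. 1) P (sig(i := j)) i"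
    using assms(8) unfolding is_NE_def P_def by auto
  have gM: "\<forall>r\<in>{1..n}. g r \<in> M" unfolding g_def using sigM invN by auto
  have LS: "\<forall>r\<in>{1..n}. \<forall>j\<in>M. ld (1+a) \<beta> g (r-1) (g r) \<le> ld (1+a) \<beta> g (r-1) j"
  proof (intro ballI)
    fix r j assume r: "r \<in> {1..n}" and j: "j \<in> M"
    define i where "i = inv r"
    have i: "i \<in> N" "pr i = r" unfolding i_def using invN r by auto
    have c1: "compl_time N pr (\<lambda>_. 1) P sig i = (1+a) * ld (1+a) \<beta> g (r-1) (g r) + b i"
      using ct[OF i(1), of sig] i unfolding g_def i_def by simp
    have "ld (1+a) \<beta> (\<lambda>r'. (sig(i := j)) (inv r')) (r-1) j = ld (1+a) \<beta> g (r-1) j"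
    proof (rule ld_cong, intro ballI)
      fix r' assume r': "r' \<in> {1..r-1}"
      hence "r' \<in> {1..n}" using r by auto
      hence "pr (inv r') = r'" using invN by auto
      hence "inv r' \<noteq> i" using i r' by auto
      thus "(sig(i := j)) (inv r') = g r'" unfolding g_def by simp
    qed
    hence c2: "compl_time N pr (\<lambda>_. 1) P (sig(i := j)) i = (1+a) * ld (1+a) \<beta> g (r-1) j + b i"
      using ct[OF i(1), of "sig(i := j)"] i by simp
    have "(1+a) * ld (1+a) \<beta> g (r-1) (g r) \<le> (1+a) * ld (1+a) \<beta> g (r-1) j"
      using NE i(1) j c1 c2 by fastforce
    thus "ld (1+a) \<beta> g (r-1) (g r) \<le> ld (1+a) \<beta> g (r-1) j" using apos by simp
  qed
  have finC: "finite (compl_time N pr (\<lambda>_. 1) P sig ` N)" using finN by simp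
  obtain i0 where i0: "i0 \<in> N" "makespan N pr (\<lambda>_. 1) P sig = compl_time N pr (\<lambda>_. 1) P sig i0"
    using Max_in[OF finC] neN unfolding makespan_def by auto
  define p where "p = pr i0"
  have p: "p \<in> {1..n}" "inv p = i0" unfolding p_def using prN invpr i0 by auto
  define \<mu> where "\<mu> = ld (1+a) \<beta> g (p-1) (g p)"
  have bi0: "b i0 = \<beta> p" unfolding \<beta>_def using p by simp
  have C: "makespan N pr (\<lambda>_. 1) P sig = (1+a) * \<mu> + \<beta> p"
    using i0 ct[OF i0(1), of sig] p bi0 unfolding \<mu>_def g_def p_def by simp
  have finE: "finite (N \<rightarrow>\<^sub>E M)" using finN finM by (simp add: finite_PiE)
  have neE: "N \<rightarrow>\<^sub>E M \<noteq> {}" using neM by (simp add: PiE_eq_empty_iff)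
  have finO: "finite (makespan N pr (\<lambda>_. 1) P ` (N \<rightarrow>\<^sub>E M))" using finE by simp
  obtain \<sigma> where \<sigma>: "\<sigma> \<in> N \<rightarrow>\<^sub>E M" "OPT N M pr (\<lambda>_. 1) P = makespan N pr (\<lambda>_. 1) P \<sigma>"
    using Min_in[OF finO] neE unfolding OPT_def by auto
  define T where "T = OPT N M pr (\<lambda>_. 1) P"
  define h where "h = (\<lambda>r. \<sigma> (inv r))"
  have hM: "\<forall>r\<in>{1..n}. h r \<in> M" unfolding h_def using \<sigma>(1) invN by (auto simp: PiE_iff)
  have finS: "finite (compl_time N pr (\<lambda>_. 1) P \<sigma> ` N)" using finN by simp
  have Tge: "compl_time N pr (\<lambda>_. 1) P \<sigma> k \<le> T" if "k \<in> N" for k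
    unfolding T_def \<sigma>(2) makespan_def using Max_ge[OF finS] that by auto
  have ldnn: "0 \<le> ld (1+a) \<beta> h R j" if "R \<le> n" for R j
    using ld_nonneg[of "1+a" R \<beta> h j] \<beta>nn a0 that by auto
  have Tb: "\<beta> p \<le> T" and T0: "0 \<le> T"
  proof -
    have "compl_time N pr (\<lambda>_. 1) P \<sigma> i0 = (1+a) * ld (1+a) \<beta> h (p-1) (\<sigma> i0) + b i0"
      using ct[OF i0(1), of \<sigma>] unfolding h_def p_def by simp
    moreover have "0 \<le> (1+a) * ld (1+a) \<beta> h (p-1) (\<sigma> i0)" using ldnn[of "p-1"] p a0 by auto
    ultimately show "\<beta> p \<le> T" using Tge[OF i0(1)] bi0 by linarith
    thus "0 \<le> T" using \<beta>nn p by force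
  qed
  have ldT: "R \<le> n \<Longrightarrow> ld (1+a) \<beta> h R j \<le> T" for R j
  proof (induction R)
    case 0 then show ?case using T0 by simp
  next
    case (Suc R)
    show ?case
    proof (cases "h (Suc R) = j")
      case True
      define k where "k = inv (Suc R)"
      have k: "k \<in> N" "pr k = Suc R" unfolding k_def using invN Suc.prems by auto
      have "compl_time N pr (\<lambda>_. 1) P \<sigma> k = (1+a) * ld (1+a) \<beta> h R j + \<beta> (Suc R)"
        using ct[OF k(1), of \<sigma>] k True unfolding h_def k_def \<beta>_def by simp
      thus ?thesis using Tge[OF k(1)] True by simp
    next
      case False
      then show ?thesis using Suc by simp
    qed
  qed
  have upper: "(\<Sum>j\<in>M. ld (1+a) \<beta> h p j) \<le> real m * T"
  proof -
    have "(\<Sum>j\<in>M. ld (1+a) \<beta> h p j) \<le> (\<Sum>j\<in>M. T)" using ldT p by (intro sum_mono) auto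
    thus ?thesis unfolding m_def by simp
  qed
  have lower: "WW (1+a) \<beta> m 0 p \<le> (\<Sum>j\<in>M. ld (1+a) \<beta> h p j)"
    by (rule LB[OF finM m_def[symmetric] m0]) (use a0 hM \<beta>mono \<beta>nn p in auto)
  have pSuc: "p = Suc (p - 1)" using p by auto
  have Wsplit: "WW (1+a) \<beta> m 0 p = WW (1+a) \<beta> m 1 (p-1) + \<beta> p"
    using WW_Suc[OF m0, of "1+a" \<beta> "p-1"] pSuc by simp
  have h1: "\<forall>r\<in>{1..p-1}. g r \<in> M" using gM p by auto
  have h2: "\<forall>r\<in>{1..p-1}. \<forall>j\<in>M. ld (1+a) \<beta> g (r-1) (g r) \<le> ld (1+a) \<beta> g (r-1) j" using LS p by auto
  have LSB: "\<forall>s\<le>m. \<exists>S\<subseteq>M. card S = s \<and>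
      (\<Sum>j\<in>M. ld (1+a) \<beta> g (p-1) j) + a * (\<Sum>j\<in>S. ld (1+a) \<beta> g (p-1) j) \<le> WW (1+a) \<beta> m s (p-1)"
    by (rule LS_bound[OF finM m_def[symmetric] m0 a0 h1 h2])
  have "1 \<le> m" using m0 by simp
  then obtain S where S: "S \<subseteq> M" "card S = 1"
    "(\<Sum>j\<in>M. ld (1+a) \<beta> g (p-1) j) + a * (\<Sum>j\<in>S. ld (1+a) \<beta> g (p-1) j) \<le> WW (1+a) \<beta> m 1 (p-1)"
    using LSB by blast
  then obtain x where x: "S = {x}" by (metis card_1_singletonE)
  have xM: "x \<in> M" using S x by auto
  have mux: "\<mu> \<le> ld (1+a) \<beta> g (p-1) x" using LS p xM unfolding \<mu>_def by auto
  have musum: "real m * \<mu> \<le> (\<Sum>j\<in>M. ld (1+a) \<beta> g (p-1) j)"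
  proof -
    have "(\<Sum>j\<in>M. \<mu>) \<le> (\<Sum>j\<in>M. ld (1+a) \<beta> g (p-1) j)" using LS p unfolding \<mu>_def by (intro sum_mono) auto
    thus ?thesis unfolding m_def by simp
  qed
  have "a * \<mu> \<le> a * ld (1+a) \<beta> g (p-1) x" using mux a0 by (rule mult_left_mono)
  hence key: "(real m + a) * \<mu> + \<beta> p \<le> real m * T"
    using S(3) x musum lower upper Wsplit by (simp add: algebra_simps)
  have mpos: "1 \<le> real m" using m0 by simp
  have h1: "(1+a) * ((real m + a) * \<mu>) \<le> (1+a) * (real m * T - \<beta> p)"
    using key a0 by (intro mult_left_mono) auto
  have h2: "(real m - 1) * \<beta> p \<le> (real m - 1) * T" using Tb mpos by (intro mult_left_mono) auto
  have "((1+a) * \<mu> + \<beta> p) * (real m + a) \<le> (2 * real m + a * real m - 1) * T"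
    using h1 h2 by (simp add: algebra_simps)
  hence "(1+a) * \<mu> + \<beta> p \<le> (2 * real m + a * real m - 1) * T / (real m + a)"
    using apos mpos by (simp add: le_divide_eq)
  thus ?thesis using C unfolding T_def P_def m_def by simp
qed

end
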